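(* Suppose every class $c\in[C]$ uses a revision protocol $\rho^c$ that is either imitative via comparison, excess payoff, or pairwise comparison. If a solution of the evolutionary dynamics (E) with initial condition in the relative interior of $X$ (i.e. $\mu^c[s,u](0)>0$ for all $c,s,u$) converges to $\mu^\star$, then $\mu^\star$ is an MSNE.
   Context: Setting. There are $C$ classes of players, $[C]=\{1,\dots,C\}$. For each class $c\in[C]$: $\mathcal S^c$ is a finite state set with $p^c$ elements; for each $s\in\mathcal S^c$, $\mathcal A^c(s)$ is a nonempty finite action set; $\phi^c(\cdot\mid s,a)$ is a probability distribution on $\mathcal S^c$ for each $s\in\mathcal S^c$, $a\in\mathcal A^c(s)$; $\mathcal U^c_D$ is a finite set of $n^c$ deterministic stationary policies, each $u\in\mathcal U^c_D$ assigning to every $s$ a point mass $u(\cdot\mid s)$ on some action of $\mathcal A^c(s)$; $m^c>0$ is the mass of class $c$; $R^c_d>0$ is the state-transition rate. Let $n=\sum_c n^c$. For $u\in\mathcal U^c_D$ put $\phi^{c,u}(s\mid s')=\sum_{a'\in\mathcal A^c(s')}\phi^c(s\mid s',a')u(a'\mid s')$; standing assumption: the Markov chain on $\mathcal S^c$ with kernel $\phi^{c,u}$ has a unique recurrent communicating class, hence a unique stationary distribution $\eta^{c,u}$. The population state is $\mu=(\mu^c)_{c\in[C]}\in X:=\prod_c X^c$, where $X^c=\{\mu^c\in\mathbb R_{\ge0}^{\mathcal S^c\times\mathcal U^c_D}:\sum_{s,u}\mu^c[s,u]=m^c\}$; write $\mu^c[\mathcal S^c,u]:=\sum_{s\in\mathcal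 S^c}\mu^c[s,u]$ and $\mu^c[\mathcal S^c,\cdot]\in\mathbb R^{n^c}_{\ge0}$ for the vector of these. A payoff map $F=(F^c)_{c\in[C]}$ is given, with $F^c$ continuously differentiable on an open neighborhood of $X$ and valued in $\mathbb R^{\mathcal U^c_D}$ ($F^c_u(\mu)$ is the payoff of policy $u$ for class $c$). Each class has a revision protocol $\rho^c=(\rho^c_{uv})_{u,v\in\mathcal U^c_D}$, a Lipschitz continuous map $\mathbb R^{n^c}\times\mathbb R^{n^c}_{\ge0}\to\mathbb R^{n^c\times n^c}_{\ge0}$ whose first argument is a payoff vector and second a policy distribution. The evolutionary dynamics (E) are the ODE on $X$: for all $c\in[C]$, $s\in\mathcal S^c$, $u\in\mathcal U^c_D$, $\dot\mu^c[s,u]=f^{c,d}_{s,u}(\mu)+f^{c,r}_{s,u}(\mu)$, where $f^{c,d}_{s,u}(\mu)=R^c_d\sum_{s'\in\mathcal S^c}\sum_{a'\in\mathcal A^c(s')}\phi^c(s\mid s',a')u(a'\mid s')\mu^c[s',u]-R^c_d\mu^c[s,u]$ and $f^{c,r}_{s,u}(\mu)=\sum_{u'\in\mathcal U^c_D}\mu^c[s,u']\rho^c_{u'u}(F^c(\mu),\mu^c[\mathcal S^c,\cdot])-\mu^c[s,u]\sum_{u'\in\mathcal U^c_D}\rho^c_{uu'}(F^c(\mu),\mu^c[\mathcal S^c,\cdot])$. Solutions from $X$ exist, are unique and remain in $X$. A state $\mu\in X$ is a mixed stationary Nash equilibrium (MSNE) if for every $c\in[C]$: (a) for all $u\in\mathcal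 U^c_D$, $\mu^c[\mathcal S^c,u]>0\Rightarrow F^c_u(\mu)\ge F^c_v(\mu)$ for all $v\in\mathcal U^c_D$; and (b) $f^{c,d}_{s,u}(\mu)=0$ for all $s\in\mathcal S^c,u\in\mathcal U^c_D$. $\mathrm{MSNE}(F,\phi)$ denotes the set of MSNE. Protocol families (for class $c$; $\pi\in\mathbb R^{n^c}$ a payoff vector, $x\in\mathbb R^{n^c}_{\ge0}$ a policy distribution of total mass $m^c$): - imitative: $\rho^c_{uv}(\pi,x)=\frac{x_v}{m^c}r^c_{uv}(\pi,x)$ with $r^c\ge0$ Lipschitz and monotone net conditional imitation rates: for all $u,v,w$, $\pi_v\ge\pi_u\iff r^c_{wv}(\pi,x)-r^c_{vw}(\pi,x)\ge r^c_{wu}(\pi,x)-r^c_{uw}(\pi,x)$; - imitative via comparison: an imitative protocol with $r^c_{uv}(\pi,x)=\varphi^c(\pi_v-\pi_u)$, where $\varphi^c$ is Lipschitz, $\varphi^c(d)=0$ for $d\le0$ and $\varphi^c(d)>0$ for $d>0$; - excess payoff: $\rho^c_{uv}(\pi,x)=\tau^c_v(\hat\pi)$ with $\hat\pi_v=\pi_v-\frac1{m^c}\sum_w x_w\pi_w$, $\tau^c:\mathbb R^{n^c}\to\mathbb R^{n^c}_{\ge0}$ Lipschitz and $\tau^c(\hat\pi)^\top\hat\pi>0$ whenever $\hat\pi$ has a positive component; it is separable if $\tau^c_v(\hat\pi)=\tau^c_v(\hat\pi_v)$ depends only on $\hat\pi_v$, with $\tau^c_v(d)>0\iff d>0$; -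 pairwise comparison: $\rho^c_{uv}(\pi,x)=\rho^c_{uv}(\pi)$ independent of $x$, Lipschitz, with $\rho^c_{uv}(\pi)>0\iff\pi_v>\pi_u$; it is impartial if $\rho^c_{uv}(\pi)=\varphi^c_v(\pi_v-\pi_u)$ for some functions $\varphi^c_v$. *)

theory Defs
  imports "HOL-Analysis.Analysis"
begin

(* Conventions.
   'c : finite type of classes, [C] = UNIV.
   's : finite type containing all states; S c is the state set of class c.
   'a : finite type containing all actions; Act c s is the action set A^c(s).
   A deterministic stationary policy of class c is a map u in PiE (S c) (Act c);
   U c is the finite set of policies of class c.
   A population state is a vector indexed by triples (c,s,u); coordinates with
   s \<notin> S c or u \<notin> U c are junk and are required to be 0 in X.
   phi c s s' a = phi^c(s | s', a). *)

type_synonym ('c,'s,'a) pstate = "real^('c \<times> 's \<times> ('s \<Rightarrow> 'a))"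

definition polp :: "('s \<Rightarrow> 'a) \<Rightarrow> 'a \<Rightarrow> 's \<Rightarrow> real" where
  "polp u a s = (if u s = a then 1 else 0)"

definition kern :: "('s \<Rightarrow> 'a set) \<Rightarrow> ('s \<Rightarrow> 's \<Rightarrow> 'a \<Rightarrow> real) \<Rightarrow> ('s \<Rightarrow> 'a) \<Rightarrow> 's \<Rightarrow> 's \<Rightarrow> real" where
  "kern Act phi u s s' = (\<Sum>a'\<in>Act s'. phi s s' a' * polp u a' s')"

definition chain_step :: "'s set \<Rightarrow> ('s \<Rightarrow> 'a set) \<Rightarrow> ('s \<Rightarrow> 's \<Rightarrow> 'a \<Rightarrow> real) \<Rightarrow> ('s \<Rightarrow> 'a) \<Rightarrow> 's \<Rightarrow> 's \<Rightarrow> bool" where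
  "chain_step S Act phi u s' s \<longleftrightarrow> s' \<in> S \<and> s \<in> S \<and> kern Act phi u s s' > 0"

definition chain_reach :: "'s set \<Rightarrow> ('s \<Rightarrow> 'a set) \<Rightarrow> ('s \<Rightarrow> 's \<Rightarrow> 'a \<Rightarrow> real) \<Rightarrow> ('s \<Rightarrow> 'a) \<Rightarrow> 's \<Rightarrow> 's \<Rightarrow> bool" where
  "chain_reach S Act phi u = (chain_step S Act phi u)\<^sup>*\<^sup>*"

text \<open>for a finite chain: a state is recurrent iff every state reachable from it leads back to it\<close>
definition recurrent_state :: "'s set \<Rightarrow> ('s \<Rightarrow> 'a set) \<Rightarrow> ('s \<Rightarrow> 's \<Rightarrow> 'a \<Rightarrow> real) \<Rightarrow> ('s \<Rightarrow> 'a) \<Rightarrow> 's \<Rightarrow> bool" where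
  "recurrent_state S Act phi u s \<longleftrightarrow> s \<in> S \<and>
     (\<forall>t. chain_reach S Act phi u s t \<longrightarrow> chain_reach S Act phi u t s)"

definition comm_class :: "'s set \<Rightarrow> ('s \<Rightarrow> 'a set) \<Rightarrow> ('s \<Rightarrow> 's \<Rightarrow> 'a \<Rightarrow> real) \<Rightarrow> ('s \<Rightarrow> 'a) \<Rightarrow> 's \<Rightarrow> 's set" where
  "comm_class S Act phi u s = {t \<in> S. chain_reach S Act phi u s t \<and> chain_reach S Act phi u t s}"

definition unique_recurrent_class :: "'s set \<Rightarrow> ('s \<Rightarrow> 'a set) \<Rightarrow> ('s \<Rightarrow> 's \<Rightarrow> 'a \<Rightarrow> real) \<Rightarrow> ('s \<Rightarrow> 'a) \<Rightarrow> bool" where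
  "unique_recurrent_class S Act phi u \<longleftrightarrow>
     (\<exists>!K. \<exists>s. recurrent_state S Act phi u s \<and> K = comm_class S Act phi u s)"

definition popX :: "('c \<Rightarrow> 's set) \<Rightarrow> ('c \<Rightarrow> ('s \<Rightarrow> 'a) set) \<Rightarrow> ('c \<Rightarrow> real) \<Rightarrow> ('c::finite,'s::finite,'a::finite) pstate set" where
  "popX S U m = {\<mu>. (\<forall>c s u. (s \<in> S c \<and> u \<in> U c \<longrightarrow> \<mu> $ (c,s,u) \<ge> 0) \<and>
                             (\<not> (s \<in> S c \<and> u \<in> U c) \<longrightarrow> \<mu> $ (c,s,u) = 0)) \<and>
                 (\<forall>c. (\<Sum>s\<in>S c. \<Sum>u\<in>U c. \<mu> $ (c,s,u)) = m c)}"

definition xdist :: "('c \<Rightarrow> 's set) \<Rightarrow> ('c::finite,'s::finite,'a::finite) pstate \<Rightarrow> 'c \<Rightarrow> ('s \<Rightarrow> 'a) \<Rightarrow> real" where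
  "xdist S \<mu> c u = (\<Sum>s\<in>S c. \<mu> $ (c,s,u))"

definition fd :: "('c \<Rightarrow> 's set) \<Rightarrow> ('c \<Rightarrow> 's \<Rightarrow> 'a set) \<Rightarrow> ('c \<Rightarrow> 's \<Rightarrow> 's \<Rightarrow> 'a \<Rightarrow> real) \<Rightarrow> ('c \<Rightarrow> real)
    \<Rightarrow> ('c::finite,'s::finite,'a::finite) pstate \<Rightarrow> 'c \<Rightarrow> 's \<Rightarrow> ('s \<Rightarrow> 'a) \<Rightarrow> real" where
  "fd S Act phi R \<mu> c s u =
     R c * (\<Sum>s'\<in>S c. \<Sum>a'\<in>Act c s'. phi c s s' a' * polp u a' s' * \<mu> $ (c,s',u)) - R c * \<mu> $ (c,s,u)"

definition fr :: "('c \<Rightarrow> 's set) \<Rightarrow> ('c \<Rightarrow> ('s \<Rightarrow> 'a) set)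
    \<Rightarrow> ('c \<Rightarrow> ('c,'s,'a) pstate \<Rightarrow> ('s \<Rightarrow> 'a) \<Rightarrow> real)
    \<Rightarrow> ('c \<Rightarrow> (('s \<Rightarrow> 'a) \<Rightarrow> real) \<Rightarrow> (('s \<Rightarrow> 'a) \<Rightarrow> real) \<Rightarrow> ('s \<Rightarrow> 'a) \<Rightarrow> ('s \<Rightarrow> 'a) \<Rightarrow> real)
    \<Rightarrow> ('c::finite,'s::finite,'a::finite) pstate \<Rightarrow> 'c \<Rightarrow> 's \<Rightarrow> ('s \<Rightarrow> 'a) \<Rightarrow> real" where
  "fr S U F rho \<mu> c s u =
     (\<Sum>u'\<in>U c. \<mu> $ (c,s,u') * rho c (F c \<mu>) (xdist S \<mu> c) u' u)
     - \<mu> $ (c,s,u) * (\<Sum>u'\<in>U c. rho c (F c \<mu>) (xdist S \<mu> c) u u')"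

definition MSNE :: "('c \<Rightarrow> 's set) \<Rightarrow> ('c \<Rightarrow> 's \<Rightarrow> 'a set) \<Rightarrow> ('c \<Rightarrow> 's \<Rightarrow> 's \<Rightarrow> 'a \<Rightarrow> real)
    \<Rightarrow> ('c \<Rightarrow> ('s \<Rightarrow> 'a) set) \<Rightarrow> ('c \<Rightarrow> real) \<Rightarrow> ('c \<Rightarrow> real)
    \<Rightarrow> ('c \<Rightarrow> ('c,'s,'a) pstate \<Rightarrow> ('s \<Rightarrow> 'a) \<Rightarrow> real)
    \<Rightarrow> ('c::finite,'s::finite,'a::finite) pstate set" where
  "MSNE S Act phi U m R F = {\<mu> \<in> popX S U m. \<forall>c.
      (\<forall>u\<in>U c. xdist S \<mu> c u > 0 \<longrightarrow> (\<forall>v\<in>U c. F c \<mu> u \<ge> F c \<mu> v)) \<and>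
      (\<forall>s\<in>S c. \<forall>u\<in>U c. fd S Act phi R \<mu> c s u = 0)}"

definition payoff_C1 :: "('c::finite,'s::finite,'a::finite) pstate set \<Rightarrow> ('c \<Rightarrow> ('s \<Rightarrow> 'a) set)
    \<Rightarrow> ('c \<Rightarrow> ('c,'s,'a) pstate \<Rightarrow> ('s \<Rightarrow> 'a) \<Rightarrow> real) \<Rightarrow> bool" where
  "payoff_C1 X U F \<longleftrightarrow> (\<exists>Nbh. open Nbh \<and> X \<subseteq> Nbh \<and>
     (\<forall>c. \<forall>u\<in>U c. \<exists>F'. (\<forall>\<mu>\<in>Nbh. ((\<lambda>\<nu>. F c \<nu> u) has_derivative blinfun_apply (F' \<mu>)) (at \<mu>))
                          \<and> continuous_on Nbh F'))"

(* Protocols of one class: U is the policy set, vectors in R^{n^c} are functions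
   on U (values outside U are irrelevant); Lipschitz w.r.t. the l1-norm on U. *)

definition nonneg_on :: "'u set \<Rightarrow> ('u \<Rightarrow> real) \<Rightarrow> bool" where
  "nonneg_on U x \<longleftrightarrow> (\<forall>w\<in>U. x w \<ge> 0)"

definition pdist :: "'u set \<Rightarrow> real \<Rightarrow> ('u \<Rightarrow> real) \<Rightarrow> bool" where
  "pdist U m x \<longleftrightarrow> nonneg_on U x \<and> sum x U = m"

definition prot_lipschitz :: "'u set \<Rightarrow> (('u \<Rightarrow> real) \<Rightarrow> ('u \<Rightarrow> real) \<Rightarrow> 'u \<Rightarrow> 'u \<Rightarrow> real) \<Rightarrow> bool" where
  "prot_lipschitz U r \<longleftrightarrow> (\<exists>L. \<forall>\<pi> \<pi>' x x'. nonneg_on U x \<longrightarrow> nonneg_on U x' \<longrightarrow>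
     (\<forall>u\<in>U. \<forall>v\<in>U. \<bar>r \<pi> x u v - r \<pi>' x' u v\<bar> \<le>
         L * (\<Sum>w\<in>U. \<bar>\<pi> w - \<pi>' w\<bar> + \<bar>x w - x' w\<bar>)))"

definition revision_protocol :: "'u set \<Rightarrow> (('u \<Rightarrow> real) \<Rightarrow> ('u \<Rightarrow> real) \<Rightarrow> 'u \<Rightarrow> 'u \<Rightarrow> real) \<Rightarrow> bool" where
  "revision_protocol U \<rho> \<longleftrightarrow>
     (\<forall>\<pi> x. nonneg_on U x \<longrightarrow> (\<forall>u\<in>U. \<forall>v\<in>U. \<rho> \<pi> x u v \<ge> 0)) \<and> prot_lipschitz U \<rho>"

definition imitative :: "'u set \<Rightarrow> real \<Rightarrow> (('u \<Rightarrow> real) \<Rightarrow> ('u \<Rightarrow> real) \<Rightarrow> 'u \<Rightarrow> 'u \<Rightarrow> real)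
    \<Rightarrow> (('u \<Rightarrow> real) \<Rightarrow> ('u \<Rightarrow> real) \<Rightarrow> 'u \<Rightarrow> 'u \<Rightarrow> real) \<Rightarrow> bool" where
  "imitative U m \<rho> r \<longleftrightarrow>
     (\<forall>\<pi> x. nonneg_on U x \<longrightarrow> (\<forall>u\<in>U. \<forall>v\<in>U. r \<pi> x u v \<ge> 0)) \<and> prot_lipschitz U r \<and>
     (\<forall>\<pi> x. pdist U m x \<longrightarrow> (\<forall>u\<in>U. \<forall>v\<in>U. \<forall>w\<in>U.
         \<pi> v \<ge> \<pi> u \<longleftrightarrow> r \<pi> x w v - r \<pi> x v w \<ge> r \<pi> x w u - r \<pi> x u w)) \<and>
     (\<forall>\<pi> x. pdist U m x \<longrightarrow> (\<forall>u\<in>U. \<forall>v\<in>U. \<rho> \<pi> x u v = x v / m * r \<pi> x u v))"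

definition imitative_comparison :: "'u set \<Rightarrow> real \<Rightarrow> (('u \<Rightarrow> real) \<Rightarrow> ('u \<Rightarrow> real) \<Rightarrow> 'u \<Rightarrow> 'u \<Rightarrow> real) \<Rightarrow> bool" where
  "imitative_comparison U m \<rho> \<longleftrightarrow> (\<exists>\<phi> :: real \<Rightarrow> real.
     (\<exists>L. L-lipschitz_on UNIV \<phi>) \<and> (\<forall>d\<le>0. \<phi> d = 0) \<and> (\<forall>d>0. \<phi> d > 0) \<and>
     imitative U m \<rho> (\<lambda>\<pi> x u v. \<phi> (\<pi> v - \<pi> u)))"

definition excess_payoff :: "'u set \<Rightarrow> real \<Rightarrow> (('u \<Rightarrow> real) \<Rightarrow> ('u \<Rightarrow> real) \<Rightarrow> 'u \<Rightarrow> 'u \<Rightarrow> real) \<Rightarrow> bool" where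
  "excess_payoff U m \<rho> \<longleftrightarrow> (\<exists>\<tau> :: ('u \<Rightarrow> real) \<Rightarrow> 'u \<Rightarrow> real.
     (\<forall>p. \<forall>v\<in>U. \<tau> p v \<ge> 0) \<and>
     (\<exists>L. \<forall>p p'. \<forall>v\<in>U. \<bar>\<tau> p v - \<tau> p' v\<bar> \<le> L * (\<Sum>w\<in>U. \<bar>p w - p' w\<bar>)) \<and>
     (\<forall>p. (\<exists>v\<in>U. p v > 0) \<longrightarrow> (\<Sum>v\<in>U. \<tau> p v * p v) > 0) \<and>
     (\<forall>\<pi> x. pdist U m x \<longrightarrow> (\<forall>u\<in>U. \<forall>v\<in>U.
         \<rho> \<pi> x u v = \<tau> (\<lambda>w. \<pi> w - (1 / m) * (\<Sum>w'\<in>U. x w' * \<pi> w')) v)))"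

definition pairwise_comparison :: "'u set \<Rightarrow> (('u \<Rightarrow> real) \<Rightarrow> ('u \<Rightarrow> real) \<Rightarrow> 'u \<Rightarrow> 'u \<Rightarrow> real) \<Rightarrow> bool" where
  "pairwise_comparison U \<rho> \<longleftrightarrow>
     (\<forall>\<pi> x x'. nonneg_on U x \<longrightarrow> nonneg_on U x' \<longrightarrow> (\<forall>u\<in>U. \<forall>v\<in>U. \<rho> \<pi> x u v = \<rho> \<pi> x' u v)) \<and>
     (\<forall>\<pi> x. nonneg_on U x \<longrightarrow> (\<forall>u\<in>U. \<forall>v\<in>U. \<rho> \<pi> x u v > 0 \<longleftrightarrow> \<pi> v > \<pi> u))"

end

theory Submission
  imports Defs
begin


definition flow :: "'u set \<Rightarrow> ('u \<Rightarrow> real) \<Rightarrow> ('u \<Rightarrow> 'u \<Rightarrow> real) \<Rightarrow> 'u \<Rightarrow> real" where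
  "flow U z r u = (\<Sum>u'\<in>U. z u' * r u' u) - z u * (\<Sum>u'\<in>U. r u u')"

definition isNash :: "'u set \<Rightarrow> ('u \<Rightarrow> real) \<Rightarrow> ('u \<Rightarrow> real) \<Rightarrow> bool" where
  "isNash U x \<pi> \<longleftrightarrow> (\<forall>u\<in>U. x u > 0 \<longrightarrow> (\<forall>v\<in>U. \<pi> v \<le> \<pi> u))"

lemma pair_rest_nash:
  assumes fin: "finite U" and xnn: "\<forall>u\<in>U. x u \<ge> 0"
    and rnn: "\<forall>u\<in>U. \<forall>v\<in>U. r u v \<ge> 0"
    and rpos: "\<forall>u\<in>U. \<forall>v\<in>U. r u v > 0 \<longleftrightarrow> \<pi> v > \<pi> u"
    and rest: "\<forall>u\<in>U. flow U x r u = 0"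
  shows "isNash U x \<pi>"
proof (rule ccontr)
  assume "\<not> isNash U x \<pi>"
  then obtain u v where u: "u \<in> U" "x u > 0" and v: "v \<in> U" "\<pi> v > \<pi> u"
    unfolding isNash_def by force
  define A where "A = {w\<in>U. x w > 0}"
  have finA: "finite A" and uA: "u \<in> A" using fin u by (auto simp: A_def)
  define M where "M = Min (\<pi> ` A)"
  have "M \<in> \<pi> ` A" unfolding M_def using finA uA by (intro Min_in) auto
  then obtain u0 where u0: "u0 \<in> A" "\<pi> u0 = M" by auto
  have Mle: "\<And>w. w \<in> A \<Longrightarrow> M \<le> \<pi> w" unfolding M_def using finA by auto
  have u0U: "u0 \<in> U" "x u0 > 0" using u0 by (auto simp: A_def)
  have "(\<Sum>u'\<in>U. x u' * r u' u0) = 0"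
  proof (rule sum.neutral, rule ballI)
    fix w assume w: "w \<in> U"
    show "x w * r w u0 = 0"
    proof (cases "x w > 0")
      case True
      then have "w \<in> A" using w by (auto simp: A_def)
      then have "\<pi> u0 \<le> \<pi> w" using Mle u0 by auto
      then have "\<not> r w u0 > 0" using rpos w u0U by auto
      then have "r w u0 = 0" using rnn w u0U by force
      then show ?thesis by simp
    next
      case False
      then have "x w = 0" using xnn w by force
      then show ?thesis by simp
    qed
  qed
  moreover have "r u0 v \<le> (\<Sum>u'\<in>U. r u0 u')"
    using fin v rnn u0U by (intro member_le_sum) auto
  moreover have "r u0 v > 0" using rpos u0U v Mle[OF uA] u0 by auto
  ultimately have "flow U x r u0 < 0" using u0U unfolding flow_def
    by (simp add: mult_pos_pos)
  then show False using rest u0U by auto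
qed

lemma sum_mult_pd: "(\<Sum>u'\<in>U. z u' * c) = (\<Sum>u'\<in>U. z u') * c" for c :: real
  by (simp add: sum_distrib_right)

lemma exc_rest_nash:
  assumes fin: "finite U" and xnn: "\<forall>u\<in>U. x u \<ge> 0" and xs: "(\<Sum>u\<in>U. x u) = m" and m: "m > 0"
    and acute: "\<forall>p. (\<exists>v\<in>U. p v > 0) \<longrightarrow> (\<Sum>v\<in>U. \<tau> p v * p v) > 0"
    and rdef: "\<forall>u\<in>U. \<forall>v\<in>U. r u v = \<tau> (\<lambda>w. \<pi> w - (1 / m) * (\<Sum>w'\<in>U. x w' * \<pi> w')) v"
    and rest: "\<forall>u\<in>U. flow U x r u = 0"
  shows "isNash U x \<pi>"
proof (rule ccontr)
  assume "\<not> isNash U x \<pi>"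
  then obtain u v where u: "u \<in> U" "x u > 0" and v: "v \<in> U" "\<pi> v > \<pi> u"
    unfolding isNash_def by force
  define p where "p = (\<lambda>w. \<pi> w - (1 / m) * (\<Sum>w'\<in>U. x w' * \<pi> w'))"
  define T where "T = (\<Sum>v\<in>U. \<tau> p v)"
  have r: "\<And>u v. u \<in> U \<Longrightarrow> v \<in> U \<Longrightarrow> r u v = \<tau> p v" using rdef p_def by auto
  have key: "m * \<tau> p w = x w * T" if w: "w \<in> U" for w
  proof -
    have "flow U x r w = (\<Sum>u'\<in>U. x u' * \<tau> p w) - x w * T"
      unfolding flow_def T_def using w by (simp add: r)
    also have "\<dots> = m * \<tau> p w - x w * T" by (simp add: sum_mult_pd xs)
    finally show ?thesis using rest w by simp
  qed
  define M where "M = Max (\<pi> ` U)"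
  have "M \<in> \<pi> ` U" unfolding M_def using fin u by (intro Max_in) auto
  then obtain v0 where v0: "v0 \<in> U" "\<pi> v0 = M" by auto
  have leM: "\<And>w. w \<in> U \<Longrightarrow> \<pi> w \<le> M" unfolding M_def using fin by auto
  have "x u * (\<pi> v0 - \<pi> u) \<le> (\<Sum>w\<in>U. x w * (\<pi> v0 - \<pi> w))"
    using fin u xnn leM v0 by (intro member_le_sum) (auto intro!: mult_nonneg_nonneg)
  moreover have "x u * (\<pi> v0 - \<pi> u) > 0" using u v leM[OF v(1)] v0 by (auto intro!: mult_pos_pos)
  ultimately have "(\<Sum>w\<in>U. x w * (\<pi> v0 - \<pi> w)) > 0" by linarith
  moreover have "(\<Sum>w\<in>U. x w * \<pi> v0) = m * \<pi> v0" by (simp add: sum_distrib_right[symmetric] xs)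
  ultimately have "m * \<pi> v0 - (\<Sum>w\<in>U. x w * \<pi> w) > 0"
    by (simp add: right_diff_distrib sum_subtractf)
  then have "p v0 > 0" unfolding p_def using m by (simp add: field_simps)
  then have pos: "(\<Sum>v\<in>U. \<tau> p v * p v) > 0" using acute v0 by blast
  have "(\<Sum>v\<in>U. \<tau> p v * p v) = (\<Sum>v\<in>U. (T / m) * (x v * p v))"
    using key m by (intro sum.cong) (auto simp: field_simps)
  also have "\<dots> = (T / m) * (\<Sum>v\<in>U. x v * p v)" by (simp add: sum_distrib_left)
  also have "(\<Sum>v\<in>U. x v * p v) = (\<Sum>v\<in>U. x v * \<pi> v) - (\<Sum>v\<in>U. x v) * ((1 / m) * (\<Sum>w'\<in>U. x w' * \<pi> w'))"
    unfolding p_def by (simp add: right_diff_distrib sum_subtractf sum_distrib_right sum_divide_distrib)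
  also have "\<dots> = 0" using xs m by simp
  finally show False using pos by simp
qed

lemma pair_nash_flow:
  assumes nash: "isNash U x \<pi>" and zx: "\<forall>w\<in>U. z w > 0 \<longrightarrow> x w > 0" and znn: "\<forall>w\<in>U. z w \<ge> 0"
    and rnn: "\<forall>u\<in>U. \<forall>v\<in>U. r u v \<ge> 0"
    and rpos: "\<forall>u\<in>U. \<forall>v\<in>U. r u v > 0 \<longleftrightarrow> \<pi> v > \<pi> u"
    and u: "u \<in> U"
  shows "flow U z r u = 0"
proof -
  have opt: "\<And>w v. w \<in> U \<Longrightarrow> v \<in> U \<Longrightarrow> z w > 0 \<Longrightarrow> r w v = 0"
  proof -
    fix w v assume "w \<in> U" "v \<in> U" "z w > 0"
    then have "\<pi> v \<le> \<pi> w" using nash zx unfolding isNash_def by auto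
    then show "r w v = 0" using rpos rnn \<open>w \<in> U\<close> \<open>v \<in> U\<close> by force
  qed
  have z0: "\<And>w. w \<in> U \<Longrightarrow> \<not> z w > 0 \<Longrightarrow> z w = 0" using znn by force
  have "(\<Sum>u'\<in>U. z u' * r u' u) = 0"
    by (rule sum.neutral) (metis opt z0 u mult_eq_0_iff)
  moreover have "z u * (\<Sum>u'\<in>U. r u u') = 0"
    using opt z0 u by (cases "z u > 0") auto
  ultimately show ?thesis unfolding flow_def by simp
qed

lemma imit_nash_flow:
  assumes nash: "isNash U x \<pi>" and zx: "\<forall>w\<in>U. z w > 0 \<longrightarrow> x w > 0" and znn: "\<forall>w\<in>U. z w \<ge> 0"
    and phi0: "\<forall>d\<le>0. \<phi> d = 0"
    and rdef: "\<forall>u\<in>U. \<forall>v\<in>U. r u v = x v / m * \<phi> (\<pi> v - \<pi> u)"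
    and u: "u \<in> U"
  shows "flow U z r u = 0"
proof -
  have opt: "\<And>w v. w \<in> U \<Longrightarrow> v \<in> U \<Longrightarrow> z w > 0 \<Longrightarrow> r w v = 0"
  proof -
    fix w v assume "w \<in> U" "v \<in> U" "z w > 0"
    then have "\<pi> v \<le> \<pi> w" using nash zx unfolding isNash_def by auto
    then show "r w v = 0" using rdef phi0 \<open>w \<in> U\<close> \<open>v \<in> U\<close> by simp
  qed
  have z0: "\<And>w. w \<in> U \<Longrightarrow> \<not> z w > 0 \<Longrightarrow> z w = 0" using znn by force
  have "(\<Sum>u'\<in>U. z u' * r u' u) = 0"
    by (rule sum.neutral) (metis opt z0 u mult_eq_0_iff)
  moreover have "z u * (\<Sum>u'\<in>U. r u u') = 0"
    using opt z0 u by (cases "z u > 0") auto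
  ultimately show ?thesis unfolding flow_def by simp
qed



lemma tau_cont:
  fixes \<tau> :: "('u \<Rightarrow> real) \<Rightarrow> 'u \<Rightarrow> real"
  assumes fin: "finite U"
    and lip: "\<forall>p p'. \<forall>v\<in>U. \<bar>\<tau> p v - \<tau> p' v\<bar> \<le> L * (\<Sum>w\<in>U. \<bar>p w - p' w\<bar>)"
    and qb: "\<And>t w. w \<in> U \<Longrightarrow> \<bar>q t w - p w\<bar> \<le> \<bar>t\<bar> * D w"
    and v: "v \<in> U"
  shows "((\<lambda>t. \<tau> (q t) v) \<longlongrightarrow> \<tau> p v) (at_right 0)"
proof -
  have "((\<lambda>t. \<tau> (q t) v - \<tau> p v) \<longlongrightarrow> 0) (at_right 0)"
  proof (rule Lim_null_comparison)
    show "\<forall>\<^sub>F t in at_right 0. norm (\<tau> (q t) v - \<tau> p v) \<le> max L 0 * (\<bar>t\<bar> * (\<Sum>w\<in>U. D w))"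
    proof (rule always_eventually, rule allI)
      fix t :: real
      have "norm (\<tau> (q t) v - \<tau> p v) \<le> L * (\<Sum>w\<in>U. \<bar>q t w - p w\<bar>)" using lip v by auto
      also have "\<dots> \<le> max L 0 * (\<Sum>w\<in>U. \<bar>q t w - p w\<bar>)"
        by (intro mult_right_mono) (auto intro: sum_nonneg)
      also have "\<dots> \<le> max L 0 * (\<Sum>w\<in>U. \<bar>t\<bar> * D w)"
        by (intro mult_left_mono sum_mono qb) auto
      finally show "norm (\<tau> (q t) v - \<tau> p v) \<le> max L 0 * (\<bar>t\<bar> * (\<Sum>w\<in>U. D w))"
        by (simp add: sum_distrib_left)
    qed
    show "((\<lambda>t. max L 0 * (\<bar>t\<bar> * (\<Sum>w\<in>U. D w))) \<longlongrightarrow> 0) (at_right 0)"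
      by (auto intro!: tendsto_eq_intros)
  qed
  then show ?thesis by (rule LIM_zero_cancel)
qed

lemma right_nonneg:
  fixes h :: "real \<Rightarrow> real"
  assumes "(h \<longlongrightarrow> h0) (at_right 0)" "\<And>t. t > 0 \<Longrightarrow> h t > 0"
  shows "h0 \<ge> 0"
proof (rule tendsto_lowerbound[OF assms(1)])
  show "\<forall>\<^sub>F x in at_right 0. 0 \<le> h x"
    using eventually_at_right_less[of 0] by eventually_elim (use assms(2) in \<open>auto intro: less_imp_le\<close>)
qed simp

lemma sum_le_single:
  fixes f :: "'u \<Rightarrow> real"
  assumes "finite U" "j \<in> U" "\<forall>w\<in>U. f w \<le> 0"
  shows "sum f U \<le> f j"
proof -
  have "sum f U = f j + sum f (U - {j})" using assms by (simp add: sum.remove)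
  moreover have "sum f (U - {j}) \<le> 0" using assms by (intro sum_nonpos) auto
  ultimately show ?thesis by simp
qed

lemma tau_lemma:
  fixes \<tau> :: "('u \<Rightarrow> real) \<Rightarrow> 'u \<Rightarrow> real"
  assumes fin: "finite U"
    and tnn: "\<forall>p. \<forall>v\<in>U. \<tau> p v \<ge> 0"
    and lip: "\<forall>p p'. \<forall>v\<in>U. \<bar>\<tau> p v - \<tau> p' v\<bar> \<le> L * (\<Sum>w\<in>U. \<bar>p w - p' w\<bar>)"
    and acute: "\<forall>p. (\<exists>v\<in>U. p v > 0) \<longrightarrow> (\<Sum>v\<in>U. \<tau> p v * p v) > 0"
    and pnp: "\<forall>w\<in>U. p w \<le> 0" and i: "i \<in> U" "p i = 0"
    and j: "j \<in> U" "\<tau> p j > 0"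
  shows "p j = 0 \<and> (\<forall>k\<in>U. k \<noteq> j \<longrightarrow> p k < 0)"
proof
  show pj: "p j = 0"
  proof (rule ccontr)
    assume "p j \<noteq> 0"
    then have pjn: "p j < 0" using pnp j by force
    define q where "q = (\<lambda>t::real. \<lambda>w. p w + (if w = i then t else 0))"
    define h where "h = (\<lambda>t. \<tau> (q t) j * p j + t * \<tau> (q t) i)"
    have "h t > 0" if t: "t > 0" for t
    proof -
      have "\<exists>v\<in>U. q t v > 0" using i t by (intro bexI[of _ i]) (auto simp: q_def)
      then have "(\<Sum>w\<in>U. \<tau> (q t) w * q t w) > 0"
        using acute by blast
      also have "(\<Sum>w\<in>U. \<tau> (q t) w * q t w)
          = (\<Sum>w\<in>U. \<tau> (q t) w * p w) + (\<Sum>w\<in>U. if w = i then \<tau> (q t) w * t else 0)"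
        unfolding q_def by (simp add: sum.distrib[symmetric] distrib_left if_distrib cong: if_cong)
      also have "(\<Sum>w\<in>U. if w = i then \<tau> (q t) w * t else 0) = t * \<tau> (q t) i"
        using fin i by (simp add: sum.delta)
      also have "(\<Sum>w\<in>U. \<tau> (q t) w * p w) \<le> \<tau> (q t) j * p j"
        using fin j pnp tnn by (intro sum_le_single) (auto intro: mult_nonneg_nonpos)
      finally show ?thesis unfolding h_def by simp
    qed
    moreover have "(h \<longlongrightarrow> \<tau> p j * p j + 0 * \<tau> p i) (at_right 0)"
      unfolding h_def
      by (intro tendsto_intros tau_cont[OF fin lip, where D="\<lambda>w. 1"] i j) (auto simp: q_def)
    ultimately have "\<tau> p j * p j + 0 * \<tau> p i \<ge> 0" by (intro right_nonneg[where h=h]) auto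
    then show False using j pjn mult_pos_neg[of "\<tau> p j" "p j"] by simp
  qed
  show "\<forall>k\<in>U. k \<noteq> j \<longrightarrow> p k < 0"
  proof (intro ballI impI, rule ccontr)
    fix k assume k: "k \<in> U" "k \<noteq> j" "\<not> p k < 0"
    then have pk: "p k = 0" using pnp by force
    define c where "c = (\<tau> p k + 1) / \<tau> p j"
    define q where "q = (\<lambda>t::real. \<lambda>w. p w + (if w = k then t else 0) - (if w = j then c * t else 0))"
    define h where "h = (\<lambda>t. \<tau> (q t) k - c * \<tau> (q t) j)"
    have "h t > 0" if t: "t > 0" for t
    proof -
      have "\<exists>v\<in>U. q t v > 0" using k pk t by (intro bexI[of _ k]) (auto simp: q_def)
      then have "(\<Sum>w\<in>U. \<tau> (q t) w * q t w) > 0"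
        using acute by blast
      also have "(\<Sum>w\<in>U. \<tau> (q t) w * q t w)
          = (\<Sum>w\<in>U. \<tau> (q t) w * p w) + (\<Sum>w\<in>U. if w = k then \<tau> (q t) w * t else 0)
             - (\<Sum>w\<in>U. if w = j then \<tau> (q t) w * (c * t) else 0)"
      proof -
        have "\<And>w. \<tau> (q t) w * q t w = \<tau> (q t) w * p w + (if w = k then \<tau> (q t) w * t else 0)
             - (if w = j then \<tau> (q t) w * (c * t) else 0)"
          using k(2) by (auto simp: q_def algebra_simps)
        then show ?thesis by (simp add: sum.distrib sum_subtractf)
      qed
      also have "(\<Sum>w\<in>U. if w = k then \<tau> (q t) w * t else 0) = t * \<tau> (q t) k"
        using fin k by (simp add: sum.delta)
      also have "(\<Sum>w\<in>U. if w = j then \<tau> (q t) w * (c * t) else 0) = t * (c * \<tau> (q t) j)"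
        using fin j by (simp add: sum.delta)
      also have "(\<Sum>w\<in>U. \<tau> (q t) w * p w) \<le> 0"
        using fin pnp tnn by (intro sum_nonpos) (auto intro: mult_nonneg_nonpos)
      finally have "t * (\<tau> (q t) k - c * \<tau> (q t) j) > 0" by (simp add: algebra_simps)
      then show ?thesis unfolding h_def using t by (simp add: zero_less_mult_iff)
    qed
    moreover have "(h \<longlongrightarrow> \<tau> p k - c * \<tau> p j) (at_right 0)"
      unfolding h_def
      by (intro tendsto_intros tau_cont[OF fin lip, where D="\<lambda>w. 1 + \<bar>c\<bar>"] k j)
         (use k(2) in \<open>auto simp: q_def abs_mult distrib_left\<close>)
    ultimately have "\<tau> p k - c * \<tau> p j \<ge> 0" by (intro right_nonneg[where h=h]) auto
    then show False using j unfolding c_def by simp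
  qed
qed



lemma exc_nash_flow:
  fixes \<tau> :: "('u \<Rightarrow> real) \<Rightarrow> 'u \<Rightarrow> real"
  assumes fin: "finite U" and xnn: "\<forall>u\<in>U. x u \<ge> 0" and xs: "(\<Sum>u\<in>U. x u) = m" and m: "m > 0"
    and nash: "isNash U x \<pi>" and zx: "\<forall>w\<in>U. z w > 0 \<longrightarrow> x w > 0" and znn: "\<forall>w\<in>U. z w \<ge> 0"
    and tnn: "\<forall>p. \<forall>v\<in>U. \<tau> p v \<ge> 0"
    and lip: "\<exists>L. \<forall>p p'. \<forall>v\<in>U. \<bar>\<tau> p v - \<tau> p' v\<bar> \<le> L * (\<Sum>w\<in>U. \<bar>p w - p' w\<bar>)"
    and acute: "\<forall>p. (\<exists>v\<in>U. p v > 0) \<longrightarrow> (\<Sum>v\<in>U. \<tau> p v * p v) > 0"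
    and rdef: "\<forall>u\<in>U. \<forall>v\<in>U. r u v = \<tau> (\<lambda>w. \<pi> w - (1 / m) * (\<Sum>w'\<in>U. x w' * \<pi> w')) v"
    and u: "u \<in> U"
  shows "flow U z r u = 0"
proof -
  obtain L where L: "\<forall>p p'. \<forall>v\<in>U. \<bar>\<tau> p v - \<tau> p' v\<bar> \<le> L * (\<Sum>w\<in>U. \<bar>p w - p' w\<bar>)"
    using lip by blast
  define p where "p = (\<lambda>w. \<pi> w - (1 / m) * (\<Sum>w'\<in>U. x w' * \<pi> w'))"
  define T where "T = (\<Sum>v\<in>U. \<tau> p v)"
  have r: "\<And>u v. u \<in> U \<Longrightarrow> v \<in> U \<Longrightarrow> r u v = \<tau> p v" using rdef p_def by auto
  define M where "M = Max (\<pi> ` U)"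
  have "M \<in> \<pi> ` U" unfolding M_def using fin u by (intro Max_in) auto
  then obtain v0 where v0: "v0 \<in> U" "\<pi> v0 = M" by auto
  have leM: "\<And>w. w \<in> U \<Longrightarrow> \<pi> w \<le> M" unfolding M_def using fin by auto
  have used: "\<pi> w = M" if "w \<in> U" "x w > 0" for w
    using nash that v0 leM unfolding isNash_def by (metis order_antisym)
  have "(\<Sum>w\<in>U. x w * \<pi> w) = (\<Sum>w\<in>U. x w * M)"
  proof (rule sum.cong)
    fix w assume w: "w \<in> U"
    show "x w * \<pi> w = x w * M"
    proof (cases "x w > 0")
      case True then show ?thesis using used w by simp
    next
      case False then have "x w = 0" using xnn w by force
      then show ?thesis by simp
    qed
  qed simp
  also have "\<dots> = m * M" by (simp add: sum_distrib_right[symmetric] xs)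
  finally have avg: "(1 / m) * (\<Sum>w'\<in>U. x w' * \<pi> w') = M" using m by simp
  have pM: "\<And>w. p w = \<pi> w - M" unfolding p_def avg by simp
  have pnp: "\<forall>w\<in>U. p w \<le> 0" using leM pM by simp
  have pv0: "p v0 = 0" using pM v0 by simp
  have fl: "flow U z r u = (\<Sum>u'\<in>U. z u') * \<tau> p u - z u * T"
    unfolding flow_def T_def using u by (simp add: r sum_distrib_right)
  show ?thesis
  proof (cases "\<exists>j\<in>U. \<tau> p j > 0")
    case False
    have "\<forall>j\<in>U. \<tau> p j = 0"
    proof
      fix j assume j: "j \<in> U"
      then have "\<tau> p j \<ge> 0" using tnn by blast
      moreover have "\<not> \<tau> p j > 0" using False j by blast
      ultimately show "\<tau> p j = 0" by linarith
    qed
    then show ?thesis using fl u by (simp add: T_def)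
  next
    case True
    then obtain j where j: "j \<in> U" "\<tau> p j > 0" by blast
    have tl: "\<And>j. j \<in> U \<Longrightarrow> \<tau> p j > 0 \<Longrightarrow> p j = 0 \<and> (\<forall>k\<in>U. k \<noteq> j \<longrightarrow> p k < 0)"
      by (rule tau_lemma[OF fin tnn L acute pnp v0(1) pv0]) auto
    have oth: "\<tau> p k = 0 \<and> z k = 0" if k: "k \<in> U" "k \<noteq> j" for k
    proof
      have pk: "p k < 0" using tl[OF j] k by auto
      show "\<tau> p k = 0"
      proof (rule ccontr)
        assume "\<tau> p k \<noteq> 0"
        moreover have "\<tau> p k \<ge> 0" using tnn k(1) by blast
        ultimately have "\<tau> p k > 0" by linarith
        then show False using tl[OF k(1)] pk by simp
      qed
      show "z k = 0"
      proof (rule ccontr)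
        assume "z k \<noteq> 0"
        then have "z k > 0" using znn k by force
        then have "x k > 0" using zx k by auto
        then have "p k = 0" using used k pM by simp
        then show False using pk by simp
      qed
    qed
    have "T = \<tau> p j + (\<Sum>v\<in>U - {j}. \<tau> p v)" unfolding T_def using fin j by (simp add: sum.remove)
    also have "(\<Sum>v\<in>U - {j}. \<tau> p v) = 0" using oth by (intro sum.neutral) auto
    finally have TT: "T = \<tau> p j" by simp
    have "(\<Sum>v\<in>U. z v) = z j + (\<Sum>v\<in>U - {j}. z v)" using fin j by (simp add: sum.remove)
    also have "(\<Sum>v\<in>U - {j}. z v) = 0" using oth by (intro sum.neutral) auto
    finally have ZZ: "(\<Sum>v\<in>U. z v) = z j" by simp
    show ?thesis
    proof (cases "u = j")
      case True then show ?thesis using fl TT ZZ by simp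
    next
      case False then show ?thesis using fl TT ZZ oth[OF u] by simp
    qed
  qed
qed

lemma mono_deriv0:
  fixes h h' :: "real \<Rightarrow> real"
  assumes "0 \<le> a" "a \<le> b"
    and d: "\<And>t. a \<le> t \<Longrightarrow> t \<le> b \<Longrightarrow> (h has_real_derivative h' t) (at t within {0..})"
    and nn: "\<And>t. a \<le> t \<Longrightarrow> t \<le> b \<Longrightarrow> h' t \<ge> 0"
  shows "h a \<le> h b"
proof (rule DERIV_nonneg_imp_increasing_open[OF assms(2)])
  fix x assume x: "a < x" "x < b"
  have "x \<in> interior {0::real..}" using x assms(1) by simp
  then have "at x within {0..} = at x" by (rule at_within_interior)
  then show "\<exists>y. DERIV h x :> y \<and> y \<ge> 0" using d[of x] nn[of x] x by auto
next
  show "continuous_on {a..b} h"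
    unfolding continuous_on_eq_continuous_within
  proof
    fix x assume x: "x \<in> {a..b}"
    then have "continuous (at x within {0..}) h" by (intro DERIV_continuous[OF d]) auto
    then show "continuous (at x within {a..b}) h"
      by (rule continuous_within_subset) (use assms(1) in auto)
  qed
qed

lemma growth:
  fixes x g :: "real \<Rightarrow> real"
  assumes "0 \<le> a" "a \<le> b"
    and d: "\<And>t. a \<le> t \<Longrightarrow> t \<le> b \<Longrightarrow> (x has_real_derivative x t * g t) (at t within {0..})"
    and gk: "\<And>t. a \<le> t \<Longrightarrow> t \<le> b \<Longrightarrow> g t \<ge> k"
    and xnn: "\<And>t. a \<le> t \<Longrightarrow> t \<le> b \<Longrightarrow> x t \<ge> 0"
  shows "x a * exp (k * (b - a)) \<le> x b"
proof -
  define h where "h = (\<lambda>t. x t * exp (- k * t))"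
  have "h a \<le> h b"
  proof (rule mono_deriv0[OF assms(1,2)])
    fix t assume t: "a \<le> t" "t \<le> b"
    show "(h has_real_derivative (x t * exp (- k * t) * (g t - k))) (at t within {0..})"
      unfolding h_def
      by (rule derivative_eq_intros d t refl | simp add: algebra_simps)+
    show "x t * exp (- k * t) * (g t - k) \<ge> 0"
      using xnn[OF t] gk[OF t] by simp
  qed
  then have "x a * exp (- k * a) * exp (k * b) \<le> x b * exp (- k * b) * exp (k * b)"
    unfolding h_def by simp
  then show ?thesis by (simp add: mult.assoc exp_add[symmetric] algebra_simps)
qed



lemma deriv_lim_pos_False:
  fixes f f' :: "real \<Rightarrow> real"
  assumes d: "\<And>t. t \<ge> 0 \<Longrightarrow> (f has_real_derivative f' t) (at t within {0..})"
    and lf: "(f \<longlongrightarrow> l1) at_top" and lf': "(f' \<longlongrightarrow> l2) at_top" and l2: "l2 > 0"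
  shows False
proof -
  have "eventually (\<lambda>t. f' t > l2/2) at_top" using order_tendstoD(1)[OF lf', of "l2/2"] l2 by simp
  then obtain T1 where T1: "\<And>t. t \<ge> T1 \<Longrightarrow> f' t > l2/2" by (auto simp: eventually_at_top_linorder)
  have "eventually (\<lambda>t. f t < l1 + 1) at_top" using order_tendstoD(2)[OF lf, of "l1 + 1"] by simp
  then obtain T2 where T2: "\<And>t. t \<ge> T2 \<Longrightarrow> f t < l1 + 1" by (auto simp: eventually_at_top_linorder)
  define T where "T = max T1 0"
  define t where "t = max T T2 + 2 * \<bar>l1 + 1 - f T\<bar> / l2 + 1"
  have nn: "2 * \<bar>l1 + 1 - f T\<bar> / l2 \<ge> 0" using l2 by simp
  have tT: "T \<le> t" and tT2: "T2 \<le> t" unfolding t_def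
    using nn max.cobounded1[of T T2] max.cobounded2[of T2 T] by linarith+
  have "f T - l2/2 * T \<le> f t - l2/2 * t"
  proof (rule mono_deriv0[where h="\<lambda>s. f s - l2/2 * s" and h'="\<lambda>s. f' s - l2/2"])
    show "0 \<le> T" "T \<le> t" using tT by (auto simp: T_def)
    fix s assume s: "T \<le> s" "s \<le> t"
    then have s0: "s \<ge> 0" by (auto simp: T_def)
    show "((\<lambda>s. f s - l2/2 * s) has_real_derivative (f' s - l2/2)) (at s within {0..})"
      by (rule derivative_eq_intros d[OF s0] refl | simp)+
    show "f' s - l2/2 \<ge> 0" using T1[of s] s by (auto simp: T_def)
  qed
  then have "f t \<ge> f T + l2/2 * (t - T)" by (simp add: right_diff_distrib)
  moreover have "l2/2 * (t - T) \<ge> l2/2 * (2 * \<bar>l1 + 1 - f T\<bar> / l2 + 1)"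
    using l2 unfolding t_def by (intro mult_left_mono) auto
  moreover have "l2/2 * (2 * \<bar>l1 + 1 - f T\<bar> / l2 + 1) = \<bar>l1 + 1 - f T\<bar> + l2/2"
    using l2 by (simp add: field_simps)
  ultimately have "f t > l1 + 1" using l2 by linarith
  then show False using T2[OF tT2] by simp
qed

lemma deriv_lim_zero:
  fixes f f' :: "real \<Rightarrow> real"
  assumes d: "\<And>t. t \<ge> 0 \<Longrightarrow> (f has_real_derivative f' t) (at t within {0..})"
    and lf: "(f \<longlongrightarrow> l1) at_top" and lf': "(f' \<longlongrightarrow> l2) at_top"
  shows "l2 = 0"
proof (rule ccontr)
  assume "l2 \<noteq> 0"
  then consider "l2 > 0" | "l2 < 0" by linarith
  then show False
  proof cases
    case 1 then show False using deriv_lim_pos_False[OF d lf lf'] by blast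
  next
    case 2
    have d2: "\<And>t. t \<ge> 0 \<Longrightarrow> ((\<lambda>t. - f t) has_real_derivative - f' t) (at t within {0..})"
      using d by (auto intro: derivative_intros)
    show False using deriv_lim_pos_False[OF d2 tendsto_minus[OF lf] tendsto_minus[OF lf']] 2 by simp
  qed
qed

lemma sum_fd_zero:
  fixes S :: "'c::finite \<Rightarrow> 's::finite set" and Act :: "'c \<Rightarrow> 's \<Rightarrow> 'a::finite set"
    and \<nu> :: "('c,'s,'a) pstate"
  assumes phi_sum: "\<And>c s' a. s' \<in> S c \<Longrightarrow> a \<in> Act c s' \<Longrightarrow> (\<Sum>s\<in>S c. phi c s s' a) = 1"
    and U_pol: "\<And>c. U c \<subseteq> PiE (S c) (Act c)"
    and u: "u \<in> U c"
  shows "(\<Sum>s\<in>S c. fd S Act phi R \<nu> c s u) = 0"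
proof -
  have pol1: "(\<Sum>a'\<in>Act c s'. polp u a' s') = 1" if s': "s' \<in> S c" for s'
  proof -
    have "u s' \<in> Act c s'" using U_pol[of c] u s' by (auto simp: PiE_def Pi_def)
    then show ?thesis unfolding polp_def by (simp add: sum.delta')
  qed
  have "(\<Sum>s\<in>S c. \<Sum>s'\<in>S c. \<Sum>a'\<in>Act c s'. phi c s s' a' * polp u a' s' * \<nu> $ (c,s',u))
      = (\<Sum>s'\<in>S c. \<Sum>s\<in>S c. \<Sum>a'\<in>Act c s'. phi c s s' a' * (polp u a' s' * \<nu> $ (c,s',u)))"
    by (subst sum.swap) (simp only: mult.assoc)
  also have "\<dots> = (\<Sum>s'\<in>S c. \<Sum>a'\<in>Act c s'. \<Sum>s\<in>S c. phi c s s' a' * (polp u a' s' * \<nu> $ (c,s',u)))"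
    by (intro sum.cong refl) (rule sum.swap)
  also have "\<dots> = (\<Sum>s'\<in>S c. \<Sum>a'\<in>Act c s'. (\<Sum>s\<in>S c. phi c s s' a') * (polp u a' s' * \<nu> $ (c,s',u)))"
    by (simp only: sum_distrib_right)
  also have "\<dots> = (\<Sum>s'\<in>S c. \<Sum>a'\<in>Act c s'. polp u a' s' * \<nu> $ (c,s',u))"
    using phi_sum by (intro sum.cong refl) auto
  also have "\<dots> = (\<Sum>s'\<in>S c. \<nu> $ (c,s',u))"
    using pol1 by (intro sum.cong refl) (simp add: sum_distrib_right[symmetric])
  finally have eq: "(\<Sum>s\<in>S c. \<Sum>s'\<in>S c. \<Sum>a'\<in>Act c s'. phi c s s' a' * polp u a' s' * \<nu> $ (c,s',u))
      = (\<Sum>s'\<in>S c. \<nu> $ (c,s',u))" .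
  show ?thesis unfolding fd_def
    by (simp add: sum_subtractf sum_distrib_left[symmetric] eq)
qed

lemma sum_fr_flow:
  "(\<Sum>s\<in>S c. fr S U F rho \<nu> c s u) =
     flow (U c) (xdist S \<nu> c) (\<lambda>a b. rho c (F c \<nu>) (xdist S \<nu> c) a b) u"
proof -
  have "(\<Sum>s\<in>S c. \<Sum>u'\<in>U c. \<nu> $ (c,s,u') * rho c (F c \<nu>) (xdist S \<nu> c) u' u)
      = (\<Sum>u'\<in>U c. \<Sum>s\<in>S c. \<nu> $ (c,s,u') * rho c (F c \<nu>) (xdist S \<nu> c) u' u)"
    by (rule sum.swap)
  also have "\<dots> = (\<Sum>u'\<in>U c. xdist S \<nu> c u' * rho c (F c \<nu>) (xdist S \<nu> c) u' u)"
    unfolding xdist_def by (simp only: sum_distrib_right)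
  finally show ?thesis unfolding fr_def flow_def
    by (simp only: sum_subtractf xdist_def sum_distrib_right)
qed

lemma fr_row_flow:
  "fr S U F rho \<nu> c s u =
     flow (U c) (\<lambda>u'. \<nu> $ (c,s,u')) (\<lambda>a b. rho c (F c \<nu>) (xdist S \<nu> c) a b) u"
  unfolding fr_def flow_def by simp

lemma popX_facts:
  fixes \<nu> :: "('c::finite,'s::finite,'a::finite) pstate"
  assumes "\<nu> \<in> popX S U m"
  shows "\<And>c s u. s \<in> S c \<Longrightarrow> u \<in> U c \<Longrightarrow> \<nu> $ (c,s,u) \<ge> 0"
    and "\<And>c u. u \<in> U c \<Longrightarrow> xdist S \<nu> c u \<ge> 0"
    and "\<And>c. (\<Sum>u\<in>U c. xdist S \<nu> c u) = m c"
    and "\<And>c s u. s \<in> S c \<Longrightarrow> u \<in> U c \<Longrightarrow> \<nu> $ (c,s,u) \<le> xdist S \<nu> c u"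
    and "\<And>c u. u \<in> U c \<Longrightarrow> xdist S \<nu> c u \<le> m c"
proof -
  show nn: "\<And>c s u. s \<in> S c \<Longrightarrow> u \<in> U c \<Longrightarrow> \<nu> $ (c,s,u) \<ge> 0" using assms by (auto simp: popX_def)
  show xn: "\<And>c u. u \<in> U c \<Longrightarrow> xdist S \<nu> c u \<ge> 0" unfolding xdist_def using nn by (auto intro: sum_nonneg)
  show sm: "(\<Sum>u\<in>U c. xdist S \<nu> c u) = m c" for c
  proof -
    have "(\<Sum>u\<in>U c. xdist S \<nu> c u) = (\<Sum>s\<in>S c. \<Sum>u\<in>U c. \<nu> $ (c,s,u))"
      unfolding xdist_def by (rule sum.swap)
    then show ?thesis using assms unfolding popX_def by auto
  qed
  show "\<And>c s u. s \<in> S c \<Longrightarrow> u \<in> U c \<Longrightarrow> \<nu> $ (c,s,u) \<le> xdist S \<nu> c u"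
    unfolding xdist_def using nn by (intro member_le_sum) auto
  show "xdist S \<nu> c u \<le> m c" if u: "u \<in> U c" for c u
  proof -
    have "xdist S \<nu> c u \<le> (\<Sum>w\<in>U c. xdist S \<nu> c w)" using xn u by (intro member_le_sum) auto
    then show ?thesis using sm by simp
  qed
qed

theorem corollary1:
  fixes S :: "'c::finite \<Rightarrow> 's::finite set"
    and Act :: "'c \<Rightarrow> 's \<Rightarrow> 'a::finite set"
    and phi :: "'c \<Rightarrow> 's \<Rightarrow> 's \<Rightarrow> 'a \<Rightarrow> real"
    and U :: "'c \<Rightarrow> ('s \<Rightarrow> 'a) set"
    and m R :: "'c \<Rightarrow> real"
    and F :: "'c \<Rightarrow> ('c,'s,'a) pstate \<Rightarrow> ('s \<Rightarrow> 'a) \<Rightarrow> real"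
    and rho :: "'c \<Rightarrow> (('s \<Rightarrow> 'a) \<Rightarrow> real) \<Rightarrow> (('s \<Rightarrow> 'a) \<Rightarrow> real) \<Rightarrow> ('s \<Rightarrow> 'a) \<Rightarrow> ('s \<Rightarrow> 'a) \<Rightarrow> real"
    and \<mu> :: "real \<Rightarrow> ('c,'s,'a) pstate"
    and \<mu>star :: "('c,'s,'a) pstate"
  assumes Act_ne: "\<And>c s. s \<in> S c \<Longrightarrow> Act c s \<noteq> {}"
    and phi_nonneg: "\<And>c s s' a. s \<in> S c \<Longrightarrow> s' \<in> S c \<Longrightarrow> a \<in> Act c s' \<Longrightarrow> phi c s s' a \<ge> 0"
    and phi_sum: "\<And>c s' a. s' \<in> S c \<Longrightarrow> a \<in> Act c s' \<Longrightarrow> (\<Sum>s\<in>S c. phi c s s' a) = 1"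
    and U_pol: "\<And>c. U c \<subseteq> PiE (S c) (Act c)"
    and unique_rec: "\<And>c u. u \<in> U c \<Longrightarrow> unique_recurrent_class (S c) (Act c) (phi c) u"
    and m_pos: "\<And>c. m c > 0"
    and R_pos: "\<And>c. R c > 0"
    and F_C1: "payoff_C1 (popX S U m) U F"
    and rho_prot: "\<And>c. revision_protocol (U c) (rho c)"
    and rho_family: "\<And>c. imitative_comparison (U c) (m c) (rho c) \<or> excess_payoff (U c) (m c) (rho c)
                          \<or> pairwise_comparison (U c) (rho c)"
    and sol_X: "\<And>t. t \<ge> 0 \<Longrightarrow> \<mu> t \<in> popX S U m"
    and sol_ode: "\<And>c s u t. s \<in> S c \<Longrightarrow> u \<in> U c \<Longrightarrow> t \<ge> 0 \<Longrightarrow>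
        ((\<lambda>t. \<mu> t $ (c,s,u)) has_real_derivative
           (fd S Act phi R (\<mu> t) c s u + fr S U F rho (\<mu> t) c s u)) (at t within {0..})"
    and init_int: "\<And>c s u. s \<in> S c \<Longrightarrow> u \<in> U c \<Longrightarrow> \<mu> 0 $ (c,s,u) > 0"
    and conv: "(\<mu> \<longlongrightarrow> \<mu>star) at_top"
  shows "\<mu>star \<in> MSNE S Act phi U m R F"
proof -
  let ?P = "popX S U m"
  have ntriv: "(at_top::real filter) \<noteq> bot" by simp
  from F_C1 obtain Nbh where Nbh: "open Nbh" "?P \<subseteq> Nbh" and
    FD: "\<And>c u. u \<in> U c \<Longrightarrow> \<exists>F'. (\<forall>\<nu>\<in>Nbh. ((\<lambda>\<nu>. F c \<nu> u) has_derivative blinfun_apply (F' \<nu>)) (at \<nu>)) \<and> continuous_on Nbh F'"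
    unfolding payoff_C1_def by blast
  have Fcont: "isCont (\<lambda>\<nu>. F c \<nu> u) \<nu>" if uU: "u \<in> U c" and nP: "\<nu> \<in> ?P" for c u \<nu>
  proof -
    obtain F' where "\<forall>\<nu>\<in>Nbh. ((\<lambda>\<nu>. F c \<nu> u) has_derivative blinfun_apply (F' \<nu>)) (at \<nu>)"
      using FD uU by blast
    then show ?thesis using Nbh nP has_derivative_continuous by blast
  qed
  have compconv: "((\<lambda>t. \<mu> t $ i) \<longlongrightarrow> \<mu>star $ i) at_top" for i
    using conv by (rule tendsto_vec_nth)
  have evP: "eventually (\<lambda>t. \<mu> t \<in> ?P) at_top"
    using eventually_ge_at_top[of "0::real"] by eventually_elim (rule sol_X)
  have star_nn: "\<mu>star $ (c,s,u) \<ge> 0" if "s \<in> S c" "u \<in> U c" for c s u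
  proof (rule tendsto_lowerbound[OF compconv])
    show "\<forall>\<^sub>F t in at_top. 0 \<le> \<mu> t $ (c,s,u)"
      using evP by eventually_elim (use that in \<open>auto simp: popX_def\<close>)
  qed simp
  have star_zero: "\<mu>star $ (c,s,u) = 0" if "\<not> (s \<in> S c \<and> u \<in> U c)" for c s u
  proof -
    have "\<forall>\<^sub>F t in at_top. \<mu> t $ (c,s,u) = 0"
      using evP by eventually_elim (use that in \<open>auto simp: popX_def\<close>)
    then have "((\<lambda>t. \<mu> t $ (c,s,u)) \<longlongrightarrow> 0) at_top" by (rule tendsto_eventually)
    then show ?thesis using tendsto_unique[OF ntriv compconv] by blast
  qed
  have star_sum: "(\<Sum>s\<in>S c. \<Sum>u\<in>U c. \<mu>star $ (c,s,u)) = m c" for c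
  proof -
    have "((\<lambda>t. \<Sum>s\<in>S c. \<Sum>u\<in>U c. \<mu> t $ (c,s,u)) \<longlongrightarrow> (\<Sum>s\<in>S c. \<Sum>u\<in>U c. \<mu>star $ (c,s,u))) at_top"
      by (intro tendsto_sum compconv)
    moreover have "\<forall>\<^sub>F t in at_top. (\<Sum>s\<in>S c. \<Sum>u\<in>U c. \<mu> t $ (c,s,u)) = m c"
      using evP by eventually_elim (auto simp: popX_def)
    then have "((\<lambda>t. \<Sum>s\<in>S c. \<Sum>u\<in>U c. \<mu> t $ (c,s,u)) \<longlongrightarrow> m c) at_top" by (rule tendsto_eventually)
    ultimately show ?thesis using tendsto_unique[OF ntriv] by blast
  qed
  have starP: "\<mu>star \<in> ?P" unfolding popX_def using star_nn star_zero star_sum by auto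
  note SF = popX_facts[OF starP]
  have xnon: "nonneg_on (U c) (xdist S \<nu> c)" if "\<nu> \<in> ?P" for \<nu> c
    using popX_facts(2)[OF that] by (auto simp: nonneg_on_def)
  have xpd: "pdist (U c) (m c) (xdist S \<nu> c)" if "\<nu> \<in> ?P" for \<nu> c
    using xnon[OF that] popX_facts(3)[OF that] by (auto simp: pdist_def)
  have Fconv: "((\<lambda>t. F c (\<mu> t) u) \<longlongrightarrow> F c \<mu>star u) at_top" if "u \<in> U c" for c u
    using isCont_tendsto_compose[OF Fcont[OF that starP] conv] .
  have xconv: "((\<lambda>t. xdist S (\<mu> t) c u) \<longlongrightarrow> xdist S \<mu>star c u) at_top" for c u
    unfolding xdist_def by (intro tendsto_sum compconv)
  have rhoconv: "((\<lambda>t. rho c (F c (\<mu> t)) (xdist S (\<mu> t) c) a b) \<longlongrightarrow> rho c (F c \<mu>star) (xdist S \<mu>star c) a b) at_top"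
    if ab: "a \<in> U c" "b \<in> U c" for c a b
  proof -
    obtain L where L: "\<forall>\<pi> \<pi>' x x'. nonneg_on (U c) x \<longrightarrow> nonneg_on (U c) x' \<longrightarrow>
       (\<forall>u\<in>U c. \<forall>v\<in>U c. \<bar>rho c \<pi> x u v - rho c \<pi>' x' u v\<bar> \<le>
         L * (\<Sum>w\<in>U c. \<bar>\<pi> w - \<pi>' w\<bar> + \<bar>x w - x' w\<bar>))"
      using rho_prot[of c] unfolding revision_protocol_def prot_lipschitz_def by blast
    have "((\<lambda>t. rho c (F c (\<mu> t)) (xdist S (\<mu> t) c) a b - rho c (F c \<mu>star) (xdist S \<mu>star c) a b) \<longlongrightarrow> 0) at_top"
    proof (rule Lim_null_comparison)
      show "\<forall>\<^sub>F t in at_top. norm (rho c (F c (\<mu> t)) (xdist S (\<mu> t) c) a b - rho c (F c \<mu>star) (xdist S \<mu>star c) a b)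
          \<le> L * (\<Sum>w\<in>U c. \<bar>F c (\<mu> t) w - F c \<mu>star w\<bar> + \<bar>xdist S (\<mu> t) c w - xdist S \<mu>star c w\<bar>)"
        using evP
      proof eventually_elim
        case (elim t)
        show ?case using L[rule_format, OF xnon[OF elim] xnon[OF starP] ab] by simp
      qed
      have "((\<lambda>t. L * (\<Sum>w\<in>U c. \<bar>F c (\<mu> t) w - F c \<mu>star w\<bar> + \<bar>xdist S (\<mu> t) c w - xdist S \<mu>star c w\<bar>))
          \<longlongrightarrow> L * (\<Sum>w\<in>U c. \<bar>F c \<mu>star w - F c \<mu>star w\<bar> + \<bar>xdist S \<mu>star c w - xdist S \<mu>star c w\<bar>)) at_top"
        by (intro tendsto_intros tendsto_sum Fconv xconv) auto
      then show "((\<lambda>t. L * (\<Sum>w\<in>U c. \<bar>F c (\<mu> t) w - F c \<mu>star w\<bar> + \<bar>xdist S (\<mu> t) c w - xdist S \<mu>star c w\<bar>)) \<longlongrightarrow> 0) at_top"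
        by simp
    qed
    then show ?thesis by (rule LIM_zero_cancel)
  qed
  have rest: "fd S Act phi R \<mu>star c s u + fr S U F rho \<mu>star c s u = 0" if su: "s \<in> S c" "u \<in> U c" for c s u
  proof (rule deriv_lim_zero[where f="\<lambda>t. \<mu> t $ (c,s,u)" and f'="\<lambda>t. fd S Act phi R (\<mu> t) c s u + fr S U F rho (\<mu> t) c s u"])
    show "\<And>t. t \<ge> 0 \<Longrightarrow> ((\<lambda>t. \<mu> t $ (c,s,u)) has_real_derivative fd S Act phi R (\<mu> t) c s u + fr S U F rho (\<mu> t) c s u) (at t within {0..})"
      by (rule sol_ode[OF su])
    show "((\<lambda>t. \<mu> t $ (c,s,u)) \<longlongrightarrow> \<mu>star $ (c,s,u)) at_top" by (rule compconv)
    show "((\<lambda>t. fd S Act phi R (\<mu> t) c s u + fr S U F rho (\<mu> t) c s u) \<longlongrightarrow>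
        fd S Act phi R \<mu>star c s u + fr S U F rho \<mu>star c s u) at_top"
      unfolding fd_def fr_def
      by (intro tendsto_intros tendsto_sum compconv rhoconv su) auto
  qed
  have restflow: "flow (U c) (xdist S \<mu>star c) (\<lambda>a b. rho c (F c \<mu>star) (xdist S \<mu>star c) a b) u = 0"
    if u: "u \<in> U c" for c u
  proof -
    have "(\<Sum>s\<in>S c. fd S Act phi R \<mu>star c s u + fr S U F rho \<mu>star c s u) = 0"
      using rest u by (intro sum.neutral) auto
    then show ?thesis by (simp add: sum.distrib sum_fd_zero[where S=S and Act=Act and phi=phi and U=U, OF phi_sum U_pol u] sum_fr_flow)
  qed
  have rnn: "\<forall>a\<in>U c. \<forall>b\<in>U c. rho c \<pi> (xdist S \<nu> c) a b \<ge> 0" if "\<nu> \<in> ?P" for c \<pi> \<nu>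
    using rho_prot[of c] xnon[OF that] unfolding revision_protocol_def by blast
  have nash: "isNash (U c) (xdist S \<mu>star c) (F c \<mu>star)" for c
  proof -
    from rho_family[of c] consider (imi) "imitative_comparison (U c) (m c) (rho c)"
      | (exc) "excess_payoff (U c) (m c) (rho c)" | (pair) "pairwise_comparison (U c) (rho c)" by blast
    then show ?thesis
    proof cases
      case pair
      have rpos: "\<forall>a\<in>U c. \<forall>b\<in>U c. rho c (F c \<mu>star) (xdist S \<mu>star c) a b > 0 \<longleftrightarrow> F c \<mu>star b > F c \<mu>star a"
        using pair xnon[OF starP, of c] unfolding pairwise_comparison_def by blast
      show ?thesis by (rule pair_rest_nash[OF finite _ rnn[OF starP] rpos]) (use SF(2) restflow in auto)
    next
      case exc
      then obtain \<tau> where acute: "\<forall>p. (\<exists>v\<in>U c. p v > 0) \<longrightarrow> (\<Sum>v\<in>U c. \<tau> p v * p v) > 0"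
        and rd: "\<forall>\<pi> x. pdist (U c) (m c) x \<longrightarrow> (\<forall>u\<in>U c. \<forall>v\<in>U c.
         rho c \<pi> x u v = \<tau> (\<lambda>w. \<pi> w - (1 / m c) * (\<Sum>w'\<in>U c. x w' * \<pi> w')) v)"
        unfolding excess_payoff_def by blast
      have rdef: "\<forall>a\<in>U c. \<forall>b\<in>U c. rho c (F c \<mu>star) (xdist S \<mu>star c) a b =
          \<tau> (\<lambda>w. F c \<mu>star w - (1 / m c) * (\<Sum>w'\<in>U c. xdist S \<mu>star c w' * F c \<mu>star w')) b"
        using rd xpd[OF starP, of c] by blast
      show ?thesis by (rule exc_rest_nash[OF finite _ SF(3) m_pos acute rdef]) (use SF(2) restflow in auto)
    next
      case imi
      then obtain \<phi> L\<phi> where L\<phi>: "L\<phi>-lipschitz_on UNIV \<phi>" and \<phi>0: "\<forall>d\<le>0. \<phi> d = 0" and \<phi>pos: "\<forall>d>0. \<phi> d > 0"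
        and im: "imitative (U c) (m c) (rho c) (\<lambda>\<pi> x u v. \<phi> (\<pi> v - \<pi> u))"
        unfolding imitative_comparison_def by blast
      have rform: "rho c (F c \<nu>) (xdist S \<nu> c) a b = xdist S \<nu> c b / m c * \<phi> (F c \<nu> b - F c \<nu> a)"
        if "\<nu> \<in> ?P" "a \<in> U c" "b \<in> U c" for \<nu> a b
        using im xpd[OF that(1), of c] that(2,3) unfolding imitative_def by blast
      have \<phi>nn: "\<phi> d \<ge> 0" for d
      proof (cases "d \<le> 0")
        case True then show ?thesis using \<phi>0 by simp
      next
        case False then show ?thesis using \<phi>pos by (simp add: less_imp_le)
      qed
      have \<phi>cont: "continuous_on UNIV \<phi>" using L\<phi> by (rule lipschitz_on_continuous_on)
      have \<phi>tend: "((\<lambda>t. \<phi> (h t)) \<longlongrightarrow> \<phi> l) F" if "(h \<longlongrightarrow> l) F" for h l and F :: "real filter"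
      proof (rule isCont_tendsto_compose[OF _ that])
        show "isCont \<phi> l" using \<phi>cont by (simp add: continuous_on_eq_continuous_at)
      qed
      have \<phi>comp: "continuous_on A (\<lambda>t. \<phi> (h t))" if "continuous_on A h" for A :: "real set" and h
        using continuous_on_compose2[OF \<phi>cont that] by auto
      show ?thesis
      proof (rule ccontr)
        assume "\<not> ?thesis"
        then obtain u v where u: "u \<in> U c" "xdist S \<mu>star c u > 0" and v: "v \<in> U c" "F c \<mu>star v > F c \<mu>star u"
          unfolding isNash_def by force
        define M where "M = Max ((F c \<mu>star) ` U c)"
        have "M \<in> (F c \<mu>star) ` U c" unfolding M_def using u by (intro Max_in) auto
        then obtain v0 where v0: "v0 \<in> U c" "F c \<mu>star v0 = M" by auto
        have leM: "\<And>w. w \<in> U c \<Longrightarrow> F c \<mu>star w \<le> M" unfolding M_def by auto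
        define g where "g = (\<lambda>\<nu>. (1 / m c) * (\<Sum>w\<in>U c. xdist S \<nu> c w * (\<phi> (F c \<nu> v0 - F c \<nu> w) - \<phi> (F c \<nu> w - F c \<nu> v0))))"
        define X where "X = (\<lambda>t. xdist S (\<mu> t) c v0)"
        have mc: "m c > 0" using m_pos by blast
        have flowg: "flow (U c) (xdist S \<nu> c) (\<lambda>a b. rho c (F c \<nu>) (xdist S \<nu> c) a b) v0 = xdist S \<nu> c v0 * g \<nu>"
          if nP: "\<nu> \<in> ?P" for \<nu>
        proof -
          have "flow (U c) (xdist S \<nu> c) (\<lambda>a b. rho c (F c \<nu>) (xdist S \<nu> c) a b) v0
              = (\<Sum>w\<in>U c. xdist S \<nu> c w * (xdist S \<nu> c v0 / m c * \<phi> (F c \<nu> v0 - F c \<nu> w)))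
                - xdist S \<nu> c v0 * (\<Sum>w\<in>U c. xdist S \<nu> c w / m c * \<phi> (F c \<nu> w - F c \<nu> v0))"
            unfolding flow_def using rform[OF nP] v0(1) by simp
          also have "\<dots> = (\<Sum>w\<in>U c. xdist S \<nu> c w * (xdist S \<nu> c v0 / m c * \<phi> (F c \<nu> v0 - F c \<nu> w))
                - xdist S \<nu> c v0 * (xdist S \<nu> c w / m c * \<phi> (F c \<nu> w - F c \<nu> v0)))"
            by (simp add: sum_subtractf sum_distrib_left)
          also have "\<dots> = (\<Sum>w\<in>U c. xdist S \<nu> c v0 * (1 / m c) * (xdist S \<nu> c w * (\<phi> (F c \<nu> v0 - F c \<nu> w) - \<phi> (F c \<nu> w - F c \<nu> v0))))"
            by (intro sum.cong refl) (use mc in \<open>simp add: field_simps\<close>)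
          also have "\<dots> = xdist S \<nu> c v0 * g \<nu>"
            unfolding g_def by (simp add: sum_distrib_left mult.assoc)
          finally show ?thesis .
        qed
        have Xd: "(X has_real_derivative X t * g (\<mu> t)) (at t within {0..})" if t: "t \<ge> 0" for t
        proof -
          have "(X has_real_derivative (\<Sum>s\<in>S c. fd S Act phi R (\<mu> t) c s v0 + fr S U F rho (\<mu> t) c s v0)) (at t within {0..})"
            unfolding X_def xdist_def by (rule DERIV_sum, rule sol_ode) (use v0(1) t in auto)
          moreover have "(\<Sum>s\<in>S c. fd S Act phi R (\<mu> t) c s v0 + fr S U F rho (\<mu> t) c s v0) = X t * g (\<mu> t)"
            by (simp add: sum.distrib sum_fd_zero[where S=S and Act=Act and phi=phi and U=U, OF phi_sum U_pol v0(1)]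
                sum_fr_flow flowg[OF sol_X[OF t]] X_def)
          ultimately show ?thesis by simp
        qed
        have Xnn: "X t \<ge> 0" if "t \<ge> 0" for t unfolding X_def using popX_facts(2)[OF sol_X[OF that] v0(1)] .
        have Xle: "X t \<le> m c" if "t \<ge> 0" for t unfolding X_def using popX_facts(5)[OF sol_X[OF that] v0(1)] .
        have gconv: "((\<lambda>t. g (\<mu> t)) \<longlongrightarrow> g \<mu>star) at_top"
          unfolding g_def by (intro tendsto_intros tendsto_sum xconv Fconv \<phi>tend v0(1)) auto
        have gpos: "g \<mu>star > 0"
        proof -
          have terms: "xdist S \<mu>star c w * (\<phi> (F c \<mu>star v0 - F c \<mu>star w) - \<phi> (F c \<mu>star w - F c \<mu>star v0)) \<ge> 0"
            if w: "w \<in> U c" for w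
          proof -
            have "\<phi> (F c \<mu>star w - F c \<mu>star v0) = 0" using \<phi>0 leM[OF w] v0 by simp
            then show ?thesis using SF(2)[OF w] \<phi>nn by simp
          qed
          have "\<phi> (F c \<mu>star u - F c \<mu>star v0) = 0" using \<phi>0 leM[OF u(1)] v0 by simp
          moreover have "\<phi> (F c \<mu>star v0 - F c \<mu>star u) > 0" using \<phi>pos leM[OF v(1)] v0 v by simp
          ultimately have "xdist S \<mu>star c u * (\<phi> (F c \<mu>star v0 - F c \<mu>star u) - \<phi> (F c \<mu>star u - F c \<mu>star v0)) > 0"
            using u by simp
          moreover have "xdist S \<mu>star c u * (\<phi> (F c \<mu>star v0 - F c \<mu>star u) - \<phi> (F c \<mu>star u - F c \<mu>star v0))
              \<le> (\<Sum>w\<in>U c. xdist S \<mu>star c w * (\<phi> (F c \<mu>star v0 - F c \<mu>star w) - \<phi> (F c \<mu>star w - F c \<mu>star v0)))"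
            using terms u(1) by (intro member_le_sum) auto
          ultimately show ?thesis unfolding g_def using mc by simp
        qed
        define \<delta> where "\<delta> = g \<mu>star / 2"
        have \<delta>pos: "\<delta> > 0" using gpos \<delta>_def by simp
        have "eventually (\<lambda>t. g (\<mu> t) > \<delta>) at_top" using order_tendstoD(1)[OF gconv] gpos \<delta>_def by simp
        then obtain T1 where T1: "\<And>t. t \<ge> T1 \<Longrightarrow> g (\<mu> t) > \<delta>" by (auto simp: eventually_at_top_linorder)
        define T where "T = max T1 0"
        have T0: "T \<ge> 0" "T \<ge> T1" by (auto simp: T_def)
        have compcont: "continuous_on {0..} (\<lambda>t. \<mu> t $ i)" for i
        proof -
          obtain c' s' u' where i: "i = (c', s', u')" by (cases i) auto
          show ?thesis
          proof (cases "s' \<in> S c' \<and> u' \<in> U c'")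
            case True then show ?thesis unfolding i
              by (intro DERIV_continuous_on[where D="\<lambda>t. fd S Act phi R (\<mu> t) c' s' u' + fr S U F rho (\<mu> t) c' s' u'"] sol_ode) auto
          next
            case False
            have "\<forall>t\<in>{0..}. \<mu> t $ i = 0" using sol_X False unfolding i popX_def by auto
            then show ?thesis by (intro continuous_on_eq[OF continuous_on_const]) auto
          qed
        qed
        have \<mu>cont: "continuous_on {0..} \<mu>"
        proof -
          have "continuous_on {0..} (\<lambda>t. \<chi> i. \<mu> t $ i)" by (intro continuous_on_vec_lambda compcont)
          then show ?thesis by simp
        qed
        have Fc: "continuous_on {0..} (\<lambda>t. F c (\<mu> t) w)" if w: "w \<in> U c" for w
        proof (rule continuous_on_compose2[OF _ \<mu>cont])
          show "continuous_on ?P (\<lambda>\<nu>. F c \<nu> w)" using Fcont[OF w] by (intro continuous_at_imp_continuous_on) auto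
          show "\<mu> ` {0..} \<subseteq> ?P" using sol_X by auto
        qed
        have xc: "continuous_on {0..} (\<lambda>t. xdist S (\<mu> t) c w)" for w
          unfolding xdist_def by (intro continuous_on_sum compcont)
        have gc: "continuous_on {0..} (\<lambda>t. g (\<mu> t))"
          unfolding g_def by (intro continuous_intros \<phi>comp Fc xc v0(1)) auto
        have "compact ((\<lambda>t. g (\<mu> t)) ` {0..T})"
          by (rule compact_continuous_image[OF continuous_on_subset[OF gc]]) auto
        then obtain B where B: "\<forall>y\<in>(\<lambda>t. g (\<mu> t)) ` {0..T}. \<bar>y\<bar> \<le> B"
          using compact_imp_bounded bounded_real by meson
        have gB: "g (\<mu> t) \<ge> - B" if "0 \<le> t" "t \<le> T" for t
        proof -
          have "\<bar>g (\<mu> t)\<bar> \<le> B" using B that by auto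
          then show ?thesis by linarith
        qed
        have Sne: "S c \<noteq> {}"
        proof
          assume "S c = {}"
          then have "(\<Sum>u\<in>U c. xdist S (\<mu> 0) c u) = 0" by (simp add: xdist_def)
          then show False using popX_facts(3)[OF sol_X[of 0]] mc by simp
        qed
        have X0: "X 0 > 0" unfolding X_def xdist_def using Sne init_int v0(1) by (intro sum_pos) auto
        have "X 0 * exp ((- B) * (T - 0)) \<le> X T"
          by (rule growth[where g="\<lambda>t. g (\<mu> t)"]) (use Xd Xnn gB T0 in auto)
        moreover have "X 0 * exp ((- B) * (T - 0)) > 0" using X0 by simp
        ultimately have XT: "X T > 0" by linarith
        define t where "t = T + m c / X T / \<delta>"
        have "m c / X T / \<delta> \<ge> 0" using mc XT \<delta>pos by (intro divide_nonneg_nonneg) auto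
        then have tT: "T \<le> t" unfolding t_def by simp
        have "X T * exp (\<delta> * (t - T)) \<le> X t"
          by (rule growth[where g="\<lambda>t. g (\<mu> t)"]) (use Xd Xnn T0 tT T1 in \<open>auto intro: less_imp_le\<close>)
        moreover have "\<delta> * (t - T) = m c / X T" unfolding t_def using \<delta>pos by simp
        moreover have "X T * (1 + m c / X T) \<le> X T * exp (m c / X T)"
          by (rule mult_left_mono) (use XT exp_ge_add_one_self in auto)
        moreover have "X T * (1 + m c / X T) = X T + m c" using XT by (simp add: field_simps)
        ultimately have "X t \<ge> X T + m c" by simp
        moreover have "X t \<le> m c" using Xle tT T0 by simp
        ultimately show False using XT by simp
      qed
    qed
  qed
  have frzero: "fr S U F rho \<mu>star c s u = 0" if su: "s \<in> S c" "u \<in> U c" for c s u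
  proof -
    have zx: "\<forall>w\<in>U c. \<mu>star $ (c,s,w) > 0 \<longrightarrow> xdist S \<mu>star c w > 0"
      using SF(4) su(1) by (auto intro: less_le_trans)
    have znn: "\<forall>w\<in>U c. \<mu>star $ (c,s,w) \<ge> 0" using SF(1) su(1) by auto
    from rho_family[of c] consider (imi) "imitative_comparison (U c) (m c) (rho c)"
      | (exc) "excess_payoff (U c) (m c) (rho c)" | (pair) "pairwise_comparison (U c) (rho c)" by blast
    then have "flow (U c) (\<lambda>u'. \<mu>star $ (c,s,u')) (\<lambda>a b. rho c (F c \<mu>star) (xdist S \<mu>star c) a b) u = 0"
    proof cases
      case imi
      then obtain \<phi> where \<phi>0: "\<forall>d\<le>0. \<phi> d = 0"
        and im: "imitative (U c) (m c) (rho c) (\<lambda>\<pi> x u v. \<phi> (\<pi> v - \<pi> u))"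
        unfolding imitative_comparison_def by blast
      have rdef: "\<forall>a\<in>U c. \<forall>b\<in>U c. rho c (F c \<mu>star) (xdist S \<mu>star c) a b = xdist S \<mu>star c b / m c * \<phi> (F c \<mu>star b - F c \<mu>star a)"
        using im xpd[OF starP, of c] unfolding imitative_def by blast
      show ?thesis by (rule imit_nash_flow[OF nash zx znn \<phi>0 rdef su(2)])
    next
      case exc
      then obtain \<tau> where tnn: "\<forall>p. \<forall>v\<in>U c. \<tau> p v \<ge> 0"
        and lip: "\<exists>L. \<forall>p p'. \<forall>v\<in>U c. \<bar>\<tau> p v - \<tau> p' v\<bar> \<le> L * (\<Sum>w\<in>U c. \<bar>p w - p' w\<bar>)"
        and acute: "\<forall>p. (\<exists>v\<in>U c. p v > 0) \<longrightarrow> (\<Sum>v\<in>U c. \<tau> p v * p v) > 0"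
        and rd: "\<forall>\<pi> x. pdist (U c) (m c) x \<longrightarrow> (\<forall>u\<in>U c. \<forall>v\<in>U c.
         rho c \<pi> x u v = \<tau> (\<lambda>w. \<pi> w - (1 / m c) * (\<Sum>w'\<in>U c. x w' * \<pi> w')) v)"
        unfolding excess_payoff_def by blast
      have rdef: "\<forall>a\<in>U c. \<forall>b\<in>U c. rho c (F c \<mu>star) (xdist S \<mu>star c) a b =
          \<tau> (\<lambda>w. F c \<mu>star w - (1 / m c) * (\<Sum>w'\<in>U c. xdist S \<mu>star c w' * F c \<mu>star w')) b"
        using rd xpd[OF starP, of c] by blast
      show ?thesis
        by (rule exc_nash_flow[OF finite _ SF(3) m_pos nash zx znn tnn lip acute rdef su(2)]) (use SF(2) in auto)
    next
      case pair
      have rpos: "\<forall>a\<in>U c. \<forall>b\<in>U c. rho c (F c \<mu>star) (xdist S \<mu>star c) a b > 0 \<longleftrightarrow> F c \<mu>star b > F c \<mu>star a"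
        using pair xnon[OF starP, of c] unfolding pairwise_comparison_def by blast
      show ?thesis by (rule pair_nash_flow[OF nash zx znn rnn[OF starP] rpos su(2)])
    qed
    then show ?thesis by (simp add: fr_row_flow)
  qed
  show ?thesis
    unfolding MSNE_def using starP nash frzero rest unfolding isNash_def by fastforce
qed

end
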